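(* Let $f\in A[X]$ be monic with discriminant $\Delta=\mathrm{Res}_X(f,f')\neq 0$, $r=v(\Delta)$, and let $N>2r$ be an integer. Then the number of roots in $A/\pi^NA$ of the reduction $f_N$ of $f$ modulo $\pi^N$ is at most $q^r$ times the number of roots of $f$ in $K$.
   Context: $K$ is a field complete with respect to a non-archimedean discrete valuation $v$, normalized by $v(\pi)=1$ for a uniformizer $\pi$ of the valuation ring $A=\{x\in K: v(x)\geq 0\}$; the residue field $A/\pi A$ is finite with $q$ elements. *)

theory Defs
  imports "HOL-Computational_Algebra.Polynomial" "Subresultants.Resultant_Prelim"
begin

text \<open>A field K with a normalized discrete valuation v (values on nonzero elements;
  the value at 0 is irrelevant and stands for +infinity), uniformizer pi.\<close>

definition discrete_valuation :: "('a::field \<Rightarrow> int) \<Rightarrow> bool" where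
  "discrete_valuation v \<longleftrightarrow>
     (\<forall>x y. x \<noteq> 0 \<longrightarrow> y \<noteq> 0 \<longrightarrow> v (x * y) = v x + v y) \<and>
     (\<forall>x y. x \<noteq> 0 \<longrightarrow> y \<noteq> 0 \<longrightarrow> x + y \<noteq> 0 \<longrightarrow> v (x + y) \<ge> min (v x) (v y)) \<and>
     v ` (UNIV - {0}) = UNIV"

definition valring :: "('a::field \<Rightarrow> int) \<Rightarrow> 'a set" where
  "valring v = {x. x = 0 \<or> v x \<ge> 0}"

definition val_complete :: "('a::field \<Rightarrow> int) \<Rightarrow> bool" where
  "val_complete v \<longleftrightarrow>
     (\<forall>X :: nat \<Rightarrow> 'a.
        (\<forall>M. \<exists>n0. \<forall>m\<ge>n0. \<forall>n\<ge>n0. X m - X n = 0 \<or> v (X m - X n) \<ge> M) \<longrightarrow>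
        (\<exists>L. \<forall>M. \<exists>n0. \<forall>n\<ge>n0. X n - L = 0 \<or> v (X n - L) \<ge> M))"

definition cong_rel :: "('a::field \<Rightarrow> int) \<Rightarrow> 'a \<Rightarrow> nat \<Rightarrow> ('a \<times> 'a) set" where
  "cong_rel v \<pi> N = {(x, y). x \<in> valring v \<and> y \<in> valring v \<and>
                        x - y \<in> (\<lambda>a. \<pi> ^ N * a) ` valring v}"

definition quot :: "('a::field \<Rightarrow> int) \<Rightarrow> 'a \<Rightarrow> nat \<Rightarrow> 'a set set" where
  "quot v \<pi> N = valring v // cong_rel v \<pi> N"

definition roots_mod :: "('a::field \<Rightarrow> int) \<Rightarrow> 'a \<Rightarrow> nat \<Rightarrow> 'a poly \<Rightarrow> 'a set set" where
  "roots_mod v \<pi> N f = {C \<in> quot v \<pi> N. \<exists>x\<in>C. poly f x \<in> (\<lambda>a. \<pi> ^ N * a) ` valring v}"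

end

theory Submission
  imports Defs
begin


definition dvs :: "('a::field \<Rightarrow> int) \<Rightarrow> int \<Rightarrow> 'a \<Rightarrow> bool" where
  "dvs v n x \<longleftrightarrow> x = 0 \<or> n \<le> v x"

locale dval =
  fixes v :: "'a::field \<Rightarrow> int"
  assumes dv: "discrete_valuation v"
begin

abbreviation P where "P \<equiv> dvs v"

lemma vmult: "x \<noteq> 0 \<Longrightarrow> y \<noteq> 0 \<Longrightarrow> v (x * y) = v x + v y"
  using dv unfolding discrete_valuation_def by blast

lemma vadd: "x \<noteq> 0 \<Longrightarrow> y \<noteq> 0 \<Longrightarrow> x + y \<noteq> 0 \<Longrightarrow> v (x + y) \<ge> min (v x) (v y)"
  using dv unfolding discrete_valuation_def by blast

lemma v1: "v 1 = 0" using vmult[of 1 1] by simp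

lemma vneg1: "v (-1) = 0" using vmult[of "-1" "-1"] v1 by simp

lemma vneg: "x \<noteq> 0 \<Longrightarrow> v (- x) = v x"
  using vmult[of "-1" x] vneg1 by simp

lemma vinv: "x \<noteq> 0 \<Longrightarrow> v (inverse x) = - v x"
  using vmult[of x "inverse x"] v1 by simp

lemma vdiv: "x \<noteq> 0 \<Longrightarrow> y \<noteq> 0 \<Longrightarrow> v (x / y) = v x - v y"
  using vmult[of x "inverse y"] vinv[of y] by (simp add: divide_inverse)

lemma vpow: "x \<noteq> 0 \<Longrightarrow> v (x ^ n) = int n * v x"
  by (induction n) (auto simp: v1 vmult algebra_simps)

lemma P0[simp]: "P n 0" by (simp add: dvs_def)

lemma P_add: "P n x \<Longrightarrow> P n y \<Longrightarrow> P n (x + y)"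
  unfolding dvs_def using vadd[of x y] by fastforce

lemma P_neg: "P n x \<Longrightarrow> P n (- x)"
  unfolding dvs_def using vneg[of x] by (cases "x = 0") auto

lemma P_neg_iff[simp]: "P n (- x) = P n x"
  using P_neg[of n x] P_neg[of n "-x"] by auto

lemma P_diff: "P n x \<Longrightarrow> P n y \<Longrightarrow> P n (x - y)"
  using P_add[of n x "-y"] by simp

lemma P_diff_sym: "P n (x - y) = P n (y - x)"
  using P_neg_iff[of n "x - y"] by simp

lemma P_mult: "P m x \<Longrightarrow> P n y \<Longrightarrow> P (m + n) (x * y)"
  unfolding dvs_def using vmult[of x y] by (cases "x = 0"; cases "y = 0") auto

lemma P_mono: "P n x \<Longrightarrow> m \<le> n \<Longrightarrow> P m x"
  unfolding dvs_def by auto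

lemma P_mult0: "P 0 x \<Longrightarrow> P n y \<Longrightarrow> P n (x * y)"
  using P_mult[of 0 x n y] by simp

lemma P_1[simp]: "P 0 1" by (simp add: dvs_def v1)

lemma P_of_nat: "P 0 (of_nat n)"
  by (induction n) (auto intro: P_add)

lemma P_sum: "(\<And>i. i \<in> S \<Longrightarrow> P n (f i)) \<Longrightarrow> P n (sum f S)"
  by (induction S rule: infinite_finite_induct) (auto intro: P_add)

lemma P_prod: "(\<And>i. i \<in> S \<Longrightarrow> P 0 (f i)) \<Longrightarrow> P 0 (prod f S)"
  by (induction S rule: infinite_finite_induct) (auto intro!: P_mult0)

lemma P_pow: "P 0 x \<Longrightarrow> P 0 (x ^ n)"
  by (induction n) (auto intro!: P_mult0)

lemma P_strict: assumes "P (e + 1) (a - b)" "b \<noteq> 0" "v b = e"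
  shows "a \<noteq> 0 \<and> v a = e"
proof -
  have a0: "a \<noteq> 0" using assms unfolding dvs_def by (auto simp: vneg)
  have ab: "a - b \<noteq> 0 \<Longrightarrow> v (a - b) \<ge> e + 1" using assms unfolding dvs_def by auto
  have ge: "v a \<ge> e"
  proof (cases "a - b = 0")
    case True then show ?thesis using assms by simp
  next
    case False
    have "v (b + (a - b)) \<ge> min (v b) (v (a - b))" using vadd[of b "a - b"] False a0 assms by simp
    then show ?thesis using False ab assms by simp
  qed
  have le: "v a \<le> e"
  proof (rule ccontr)
    assume "\<not> v a \<le> e"
    show False
    proof (cases "a - b = 0")
      case True then show ?thesis using assms \<open>\<not> v a \<le> e\<close> by simp
    next
      case False
      have "v (a + (-(a - b))) \<ge> min (v a) (v (-(a - b)))" using vadd[of a "-(a - b)"] False a0 assms by simp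
      moreover have "v (b - a) = v (a - b)" using vneg[of "a - b"] False by simp
      ultimately show ?thesis using False ab \<open>\<not> v a \<le> e\<close> assms by simp
    qed
  qed
  show ?thesis using a0 ge le by simp
qed

lemma valring_P: "x \<in> valring v \<longleftrightarrow> P 0 x"
  by (simp add: valring_def dvs_def)

lemma ideal_P: assumes "\<pi> \<noteq> 0" "v \<pi> = 1"
  shows "x \<in> (\<lambda>a. \<pi> ^ N * a) ` valring v \<longleftrightarrow> P (int N) x"
proof
  assume "x \<in> (\<lambda>a. \<pi> ^ N * a) ` valring v"
  then obtain a where a: "P 0 a" "x = \<pi> ^ N * a" by (auto simp: valring_P)
  have "P (int N) (\<pi> ^ N)" using assms by (simp add: dvs_def vpow)
  then show "P (int N) x" using P_mult[OF _ a(1)] a(2) by fastforce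
next
  assume x: "P (int N) x"
  have pn: "\<pi> ^ N \<noteq> 0" using assms by simp
  have "P 0 (x / \<pi> ^ N)" using x pn assms unfolding dvs_def by (cases "x = 0") (auto simp: vdiv vpow)
  moreover have "x = \<pi> ^ N * (x / \<pi> ^ N)" using pn by simp
  ultimately show "x \<in> (\<lambda>a. \<pi> ^ N * a) ` valring v" by (intro image_eqI[where x = "x / \<pi> ^ N"]) (auto simp: valring_P)
qed

lemma P_div_pow: assumes "\<pi> \<noteq> 0" "v \<pi> = 1" "P (int M + n) x" "n \<ge> 0"
  shows "P n (x / \<pi> ^ M) \<and> x = \<pi> ^ M * (x / \<pi> ^ M)"
  using assms unfolding dvs_def by (cases "x = 0") (auto simp: vdiv vpow)

lemma P_pi_pow: assumes "\<pi> \<noteq> 0" "v \<pi> = 1" shows "P (int M) (\<pi> ^ M)"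
  using assms by (simp add: dvs_def vpow)

end



context dval begin

definition intp :: "'a poly \<Rightarrow> bool" where "intp f \<longleftrightarrow> (\<forall>i. P 0 (coeff f i))"

lemma intp_pCons: "intp (pCons a p) \<longleftrightarrow> P 0 a \<and> intp p"
  unfolding intp_def by (auto simp: coeff_pCons split: nat.splits)

lemma poly_P0: "intp f \<Longrightarrow> P 0 x \<Longrightarrow> P 0 (poly f x)"
  by (induction f rule: pCons_induct) (auto simp: intp_pCons intro!: P_add P_mult0)

lemma pderiv_intp: "intp f \<Longrightarrow> intp (pderiv f)"
  unfolding intp_def by (auto simp: coeff_pderiv intro!: P_mult0 P_add P_of_nat)

lemma intp_add: "intp f \<Longrightarrow> intp g \<Longrightarrow> intp (f + g)"
  unfolding intp_def by (auto intro: P_add)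

lemma taylor: "intp f \<Longrightarrow> P 0 x \<Longrightarrow> P 0 h \<Longrightarrow>
  \<exists>c. P 0 c \<and> poly f (x + h) = poly f x + poly (pderiv f) x * h + h^2 * c"
proof (induction f rule: pCons_induct)
  case 0 then show ?case by (intro exI[of _ 0]) simp
next
  case (pCons a g)
  then have g: "intp g" and a: "P 0 a" by (auto simp: intp_pCons)
  obtain e where e: "P 0 e" "poly g (x + h) = poly g x + poly (pderiv g) x * h + h^2 * e"
    using pCons g by blast
  have g': "P 0 (poly (pderiv g) x)" using poly_P0[OF pderiv_intp[OF g]] pCons by blast
  show ?case
  proof (intro exI conjI)
    show "P 0 (poly (pderiv g) x + x * e + h * e)"
      using g' e pCons by (auto intro!: P_add P_mult0)
    show "poly (pCons a g) (x + h) = poly (pCons a g) x + poly (pderiv (pCons a g)) x * h +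
      h\<^sup>2 * (poly (pderiv g) x + x * e + h * e)"
    proof -
      have "poly (pCons a g) (x + h) = a + (x + h) * poly g (x + h)" by simp
      also have "\<dots> = a + (x + h) * (poly g x + poly (pderiv g) x * h + h^2 * e)" by (simp only: e(2))
      also have "\<dots> = poly (pCons a g) x + poly (pderiv (pCons a g)) x * h +
        h\<^sup>2 * (poly (pderiv g) x + x * e + h * e)"
        by (simp add: pderiv_pCons algebra_simps power2_eq_square)
      finally show ?thesis .
    qed
  qed
qed

lemma poly_diff_P: assumes "intp f" "P 0 x" "P 0 y" "P n (y - x)" "n \<ge> 0"
  shows "P n (poly f y - poly f x)"
proof -
  have h: "P 0 (y - x)" using assms P_mono by blast
  obtain c where c: "P 0 c" "poly f (x + (y - x)) = poly f x + poly (pderiv f) x * (y - x) + (y - x)^2 * c"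
    using taylor[OF assms(1,2) h] by blast
  have "poly f y - poly f x = (y - x) * (poly (pderiv f) x + (y - x) * c)"
    using c(2) by (simp add: algebra_simps power2_eq_square)
  moreover have "P 0 (poly (pderiv f) x + (y - x) * c)"
    using poly_P0[OF pderiv_intp[OF assms(1)] assms(2)] h c by (auto intro!: P_add P_mult0)
  ultimately show ?thesis using P_mult[OF assms(4)] by (metis add_0_right mult.commute P_mult0)
qed

end



context dval begin

lemma P_pos_v: "P n x \<Longrightarrow> x \<noteq> 0 \<Longrightarrow> v x \<ge> n" by (simp add: dvs_def)

lemma hensel:
  assumes complete: "val_complete v" and f: "intp f" and x: "P 0 x"
    and fx: "P (int N) (poly f x)" and d0: "poly (pderiv f) x \<noteq> 0"
    and e: "v (poly (pderiv f) x) = e" and Ne: "int N > 2 * e"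
  shows "\<exists>\<alpha>. P 0 \<alpha> \<and> poly f \<alpha> = 0 \<and> P (int N - e) (\<alpha> - x)"
proof -
  define g where "g = pderiv f"
  have g: "intp g" using pderiv_intp[OF f] g_def by simp
  have e0: "e \<ge> 0" using poly_P0[OF g x] d0 e g_def by (simp add: dvs_def)
  define xs where "xs = rec_nat x (\<lambda>_ y. y - poly f y / poly g y)"
  have xs0: "xs 0 = x" by (simp add: xs_def)
  have xsS: "xs (Suc k) = xs k - poly f (xs k) / poly g (xs k)" for k by (simp add: xs_def)
  define Inv where "Inv k \<longleftrightarrow> P 0 (xs k) \<and> P (e + 1) (poly g (xs k) - poly g x) \<and>
     P (int N + int k) (poly f (xs k)) \<and> P (int N - e) (xs k - x)" for k
  have step: "P (int N + int k - e) (xs (Suc k) - xs k) \<and> Inv (Suc k)" if I: "Inv k" for k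
  proof -
    let ?y = "xs k"
    have y: "P 0 ?y" and gy0: "P (e + 1) (poly g ?y - poly g x)" and fy: "P (int N + int k) (poly f ?y)"
      and yx: "P (int N - e) (?y - x)" using I unfolding Inv_def by auto
    have gy: "poly g ?y \<noteq> 0 \<and> v (poly g ?y) = e"
      using P_strict[OF gy0] d0 e g_def by auto
    define h where "h = - (poly f ?y / poly g ?y)"
    have h: "P (int N + int k - e) h"
    proof (cases "poly f ?y = 0")
      case True then show ?thesis by (simp add: h_def)
    next
      case False
      then have "v h = v (poly f ?y) - e" using gy by (simp add: h_def vneg vdiv)
      then show ?thesis using fy False unfolding dvs_def by auto
    qed
    have h1: "P (e + 1) h" using P_mono[OF h] Ne by simp
    have h0: "P 0 h" using P_mono[OF h] Ne e0 by simp
    have xsS': "xs (Suc k) = ?y + h" by (simp add: xsS h_def)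
    obtain c where c: "P 0 c" "poly f (?y + h) = poly f ?y + poly (pderiv f) ?y * h + h^2 * c"
      using taylor[OF f y h0] by blast
    have "poly f ?y + poly (pderiv f) ?y * h = 0" using gy g_def by (simp add: h_def)
    then have fS: "poly f (?y + h) = h * h * c" using c(2) by (simp add: power2_eq_square)
    have "P ((int N + int k - e) + (int N + int k - e)) (h * h)" using P_mult[OF h h] .
    then have "P (int N + int (Suc k)) (h * h)" using P_mono Ne by fastforce
    then have A: "P (int N + int (Suc k)) (poly f (xs (Suc k)))"
      using P_mult[of _ "h*h" 0 c] c(1) fS xsS' by simp
    have "P (e + 1) (poly g (?y + h) - poly g ?y)"
      using poly_diff_P[OF g y P_add[OF y h0]] h1 e0 by simp
    then have B: "P (e + 1) (poly g (xs (Suc k)) - poly g x)"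
      using P_add[OF _ gy0] xsS' by fastforce
    have C: "P (int N - e) (xs (Suc k) - x)"
      using P_add[OF P_mono[OF h] yx] xsS' by (simp add: algebra_simps)
    have D: "P 0 (xs (Suc k))" using P_add[OF y h0] xsS' by simp
    show ?thesis using A B C D h xsS' unfolding Inv_def by simp
  qed
  have inv: "Inv k" for k
  proof (induction k)
    case 0 then show ?case using x fx unfolding Inv_def xs0 by simp
  next
    case (Suc k) then show ?case using step by blast
  qed
  have cauchy: "P (int N + int n - e) (xs (n + j) - xs n)" for n j
  proof (induction j)
    case 0 then show ?case by simp
  next
    case (Suc j)
    have "P (int N + int (n + j) - e) (xs (Suc (n + j)) - xs (n + j))" using step inv by blast
    then have "P (int N + int n - e) (xs (Suc (n + j)) - xs (n + j))" using P_mono by fastforce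
    from P_add[OF this Suc] show ?case by simp
  qed
  have cau2: "P (int N + int n - e) (xs m - xs n)" if "m \<ge> n" for m n
    using cauchy[of n "m - n"] that by simp
  have "\<exists>L. \<forall>M. \<exists>n0. \<forall>n\<ge>n0. xs n - L = 0 \<or> v (xs n - L) \<ge> M"
  proof (rule complete[unfolded val_complete_def, rule_format])
    fix M
    show "\<exists>n0. \<forall>m\<ge>n0. \<forall>n\<ge>n0. xs m - xs n = 0 \<or> M \<le> v (xs m - xs n)"
    proof (intro exI allI impI)
      fix m n assume mn: "nat (M - int N + e) \<le> m" "nat (M - int N + e) \<le> n"
      have "P M (xs m - xs n)"
      proof (cases "m \<ge> n")
        case True then show ?thesis using P_mono[OF cau2[OF True]] mn by simp
      next
        case False then show ?thesis using P_mono[OF cau2[of m n]] mn by (simp add: P_diff_sym)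
      qed
      then show "xs m - xs n = 0 \<or> M \<le> v (xs m - xs n)" by (simp add: dvs_def)
    qed
  qed
  then obtain L where L: "\<And>M. \<exists>n0. \<forall>n\<ge>n0. P M (xs n - L)" unfolding dvs_def by blast
  have L0: "P 0 L"
  proof -
    obtain n0 where "\<forall>n\<ge>n0. P 0 (xs n - L)" using L by blast
    then have a: "P 0 (xs n0 - L)" by simp
    have b: "P 0 (xs n0)" using inv[of n0] unfolding Inv_def by simp
    show ?thesis using P_diff[OF b a] by simp
  qed
  have fL: "poly f L = 0"
  proof (rule ccontr)
    assume nz: "poly f L \<noteq> 0"
    define M where "M = v (poly f L) + 1"
    have M0: "M \<ge> 0" using poly_P0[OF f L0] nz unfolding M_def dvs_def by simp
    obtain n0 where n0: "\<forall>n\<ge>n0. P M (xs n - L)" using L by blast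
    define n where "n = max n0 (nat M)"
    have "P M (xs n - L)" using n0 n_def by simp
    then have "P M (poly f L - poly f (xs n))"
      using poly_diff_P[OF f _ L0, of "xs n" M] inv[of n] M0 unfolding Inv_def by (simp add: P_diff_sym)
    moreover have "P M (poly f (xs n))"
      using inv[of n] P_mono n_def unfolding Inv_def by fastforce
    ultimately have "P M (poly f L)" using P_add by fastforce
    then show False using nz M_def by (simp add: dvs_def)
  qed
  have Lx: "P (int N - e) (L - x)"
  proof -
    obtain n0 where "\<forall>n\<ge>n0. P (int N - e) (xs n - L)" using L by blast
    then have a: "P (int N - e) (xs n0 - L)" by simp
    have b: "P (int N - e) (xs n0 - x)" using inv[of n0] unfolding Inv_def by simp
    have "L - x = (xs n0 - x) - (xs n0 - L)" by simp
    then show ?thesis using P_diff[OF b a] by metis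
  qed
  show ?thesis using L0 fL Lx by blast
qed

end



lemma rowsum_monom:
  fixes p :: "'a::comm_ring_1 poly"
  assumes "a + degree p < d"
  shows "(\<Sum>j<d. coeff (monom 1 (Suc a) * p) (d - j) * x^(d-1-j)) = x^a * poly p x"
proof -
  let ?Q = "monom 1 a * p"
  have "(\<Sum>j<d. coeff (monom 1 (Suc a) * p) (d - j) * x^(d-1-j)) =
        (\<Sum>j<d. coeff ?Q (d - Suc j) * x^(d - Suc j))"
  proof (rule sum.cong[OF refl])
    fix j assume "j \<in> {..<d}"
    then have "d - j = Suc (d - Suc j)" by auto
    then show "coeff (monom 1 (Suc a) * p) (d - j) * x^(d-1-j) = coeff ?Q (d - Suc j) * x^(d - Suc j)"
      by (simp add: coeff_monom_mult)
  qed
  also have "\<dots> = (\<Sum>t<d. coeff ?Q t * x^t)"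
    using sum.nat_diff_reindex[of "\<lambda>t. coeff ?Q t * x^t" d] by simp
  also have "\<dots> = (\<Sum>t\<le>degree ?Q. coeff ?Q t * x^t)"
  proof (rule sum.mono_neutral_right)
    have "degree ?Q \<le> a + degree p"
      using degree_mult_le[of "monom 1 a" p] degree_monom_le[of "1::'a" a] by linarith
    then show "{..degree ?Q} \<subseteq> {..<d}" using assms by auto
    show "\<forall>i\<in>{..<d} - {..degree ?Q}. coeff ?Q i * x ^ i = 0" by (auto simp: coeff_eq_0)
  qed simp
  also have "\<dots> = poly ?Q x" by (simp add: poly_altdef)
  also have "\<dots> = x^a * poly p x" by (simp add: poly_monom)
  finally show ?thesis .
qed

context dval begin

lemma det_P0: assumes "A \<in> carrier_mat n n" "\<And>i j. i < n \<Longrightarrow> j < n \<Longrightarrow> P 0 (A $$ (i,j))"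
  shows "P 0 (det A)"
proof -
  have "P 0 (signof p * (\<Prod>i = 0..<n. A $$ (i, p i)))" if p: "p permutes {0..<n}" for p
  proof (rule P_mult0)
    show "P 0 (signof p)" by (simp add: sign_def)
    show "P 0 (\<Prod>i = 0..<n. A $$ (i, p i))"
      using assms(2) p permutes_in_image[OF p] by (auto intro!: P_prod)
  qed
  then show ?thesis unfolding det_def'[OF assms(1)] by (auto intro!: P_sum)
qed

lemma sylv_P0: assumes "intp f" "intp g" "i < degree f + degree g" "j < degree f + degree g"
  shows "P 0 (sylvester_mat f g $$ (i,j))"
  using assms unfolding sylvester_index_mat[OF assms(3,4)] intp_def by auto

lemma res_P:
  assumes f: "intp f" and g: "intp g" and x: "P 0 x" and k: "k \<ge> 0"
    and fx: "P k (poly f x)" and gx: "P k (poly g x)" and d0: "degree f + degree g > 0"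
  shows "P k (resultant f g)"
proof -
  define m where "m = degree f"
  define n where "n = degree g"
  define d where "d = m + n"
  define S where "S = sylvester_mat f g"
  have S: "S \<in> carrier_mat d d" unfolding S_def d_def m_def n_def by auto
  define u where "u = vec d (\<lambda>j. x^(d-1-j))"
  have u: "u \<in> carrier_vec d" unfolding u_def by simp
  have d1: "d - 1 < d" using d0 unfolding d_def m_def n_def by simp
  define M where "M = replace_col S (S *\<^sub>v u) (d-1)"
  have M: "M \<in> carrier_mat d d" using S unfolding M_def replace_col_def by auto
  have "det M = u $ (d-1) * det S" using cramer_lemma_mat[OF S u d1] M_def by simp
  then have detM: "det M = det S" using d1 unfolding u_def by simp
  have Su: "(S *\<^sub>v u) $ i = (if i < n then x^(n-1-i) * poly f x else x^(d-1-i) * poly g x)"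
    if i: "i < d" for i
  proof -
    have "(S *\<^sub>v u) $ i = (\<Sum>j<d. S $$ (i,j) * x^(d-1-j))"
      using S i u unfolding u_def by (auto simp: scalar_prod_def atLeast0LessThan intro!: sum.cong)
    also have "\<dots> = (if i < n then x^(n-1-i) * poly f x else x^(d-1-i) * poly g x)"
    proof (cases "i < n")
      case True
      have "(\<Sum>j<d. S $$ (i,j) * x^(d-1-j)) = (\<Sum>j<d. coeff (monom 1 (Suc (n-1-i)) * f) (d - j) * x^(d-1-j))"
      proof (rule sum.cong[OF refl])
        fix j assume j: "j \<in> {..<d}"
        have "S $$ (i,j) = coeff (monom 1 (n - i) * f) (d - j)"
          using sylvester_index_mat2[of i f g j] True i j unfolding S_def d_def m_def n_def by simp
        moreover have "n - i = Suc (n-1-i)" using True by simp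
        ultimately show "S $$ (i,j) * x^(d-1-j) = coeff (monom 1 (Suc (n-1-i)) * f) (d - j) * x^(d-1-j)"
          by simp
      qed
      also have "\<dots> = x^(n-1-i) * poly f x" using True by (intro rowsum_monom) (auto simp: d_def m_def)
      finally show ?thesis using True by simp
    next
      case False
      have "(\<Sum>j<d. S $$ (i,j) * x^(d-1-j)) = (\<Sum>j<d. coeff (monom 1 (Suc (d-1-i)) * g) (d - j) * x^(d-1-j))"
      proof (rule sum.cong[OF refl])
        fix j assume j: "j \<in> {..<d}"
        have "S $$ (i,j) = coeff (monom 1 (d - i) * g) (d - j)"
          using sylvester_index_mat2[of i f g j] False i j unfolding S_def d_def m_def n_def by simp
        moreover have "d - i = Suc (d-1-i)" using i by simp
        ultimately show "S $$ (i,j) * x^(d-1-j) = coeff (monom 1 (Suc (d-1-i)) * g) (d - j) * x^(d-1-j)"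
          by simp
      qed
      also have "\<dots> = x^(d-1-i) * poly g x" using False i by (intro rowsum_monom) (auto simp: d_def n_def)
      finally show ?thesis using False by simp
    qed
    finally show ?thesis .
  qed
  have SuP: "P k ((S *\<^sub>v u) $ i)" if "i < d" for i
    using Su[OF that] fx gx x by (auto intro!: P_mult0 P_pow)
  have Mentry: "P 0 (M $$ (i,j))" if "i < d" "j < d" for i j
  proof -
    have "M $$ (i,j) = (if j = d - 1 then (S *\<^sub>v u) $ i else S $$ (i,j))"
      using that S unfolding M_def replace_col_def by auto
    moreover have "P 0 ((S *\<^sub>v u) $ i)" using SuP[OF that(1)] k P_mono by blast
    moreover have "P 0 (S $$ (i,j))" using sylv_P0[OF f g, of i j] that unfolding S_def d_def m_def n_def by simp
    ultimately show ?thesis by simp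
  qed
  have cof: "P 0 (cofactor M i (d-1))" if "i < d" for i
    unfolding cofactor_def
  proof (rule P_mult0)
    show "P 0 ((-1) ^ (i + (d - 1)))" by (auto intro!: P_pow)
    show "P 0 (det (mat_delete M i (d - 1)))"
    proof (rule det_P0)
      show "mat_delete M i (d - 1) \<in> carrier_mat (d-1) (d-1)" using mat_delete_carrier[OF M] .
      fix i' j' assume "i' < d - 1" "j' < d - 1"
      then show "P 0 (mat_delete M i (d - 1) $$ (i', j'))"
        using M Mentry unfolding mat_delete_def by auto
    qed
  qed
  have "det M = (\<Sum>i<d. M $$ (i, d-1) * cofactor M i (d-1))"
    using laplace_expansion_column[OF M d1] .
  moreover have "P k (\<Sum>i<d. M $$ (i, d-1) * cofactor M i (d-1))"
  proof (rule P_sum)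
    fix i assume i: "i \<in> {..<d}"
    have "M $$ (i, d-1) = (S *\<^sub>v u) $ i" using i S d1 unfolding M_def replace_col_def by auto
    then show "P k (M $$ (i, d-1) * cofactor M i (d-1))"
      using P_mult[OF SuP cof, of i i] i by simp
  qed
  ultimately show ?thesis using detM unfolding S_def resultant_def by simp
qed

end



primrec dlist :: "'a::field \<Rightarrow> 'a list \<Rightarrow> 'a" where
  "dlist \<pi> [] = 0"
| "dlist \<pi> (t # ts) = t + \<pi> * dlist \<pi> ts"

context dval begin

lemma cong_rel_P: assumes "\<pi> \<noteq> 0" "v \<pi> = 1"
  shows "cong_rel v \<pi> N = {(x,y). P 0 x \<and> P 0 y \<and> P (int N) (x - y)}"
  unfolding cong_rel_def valring_P ideal_P[OF assms] by simp

lemma equiv_cong: assumes "\<pi> \<noteq> 0" "v \<pi> = 1"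
  shows "equiv (valring v) (cong_rel v \<pi> N)"
proof (rule equivI)
  show "refl_on (valring v) (cong_rel v \<pi> N)"
    unfolding refl_on_def cong_rel_P[OF assms] by (auto simp: valring_P)
  show "sym (cong_rel v \<pi> N)"
    unfolding sym_def cong_rel_P[OF assms] by (auto simp: P_diff_sym)
  show "trans (cong_rel v \<pi> N)"
    unfolding trans_def cong_rel_P[OF assms]
  proof (clarsimp)
    fix x y z assume "P (int N) (x - y)" "P (int N) (y - z)"
    from P_add[OF this] show "P (int N) (x - z)" by simp
  qed
  show "cong_rel v \<pi> N \<subseteq> valring v \<times> valring v" unfolding cong_rel_def by auto
qed

lemma count_ball:
  assumes pi: "\<pi> \<noteq> 0" "v \<pi> = 1" and fin: "finite (quot v \<pi> 1)" and q: "card (quot v \<pi> 1) = q"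
    and al: "P 0 \<alpha>" and sN: "s \<le> N"
  shows "finite {C \<in> quot v \<pi> N. \<exists>y\<in>C. P (int N - int s) (y - \<alpha>)} \<and>
         card {C \<in> quot v \<pi> N. \<exists>y\<in>C. P (int N - int s) (y - \<alpha>)} \<le> q ^ s"
proof -
  define T where "T = (\<lambda>C. SOME x. x \<in> C) ` quot v \<pi> 1"
  have eq1: "equiv (valring v) (cong_rel v \<pi> 1)" using equiv_cong[OF pi] .
  have eqN: "equiv (valring v) (cong_rel v \<pi> N)" using equiv_cong[OF pi] .
  have finT: "finite T" using fin unfolding T_def by simp
  have cardT: "card T \<le> q" using card_image_le[OF fin] q unfolding T_def by simp
  have TA: "P 0 t" if tT: "t \<in> T" for t
  proof -
    obtain C where C: "C \<in> quot v \<pi> 1" "t = (SOME x. x \<in> C)" using tT unfolding T_def by blast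
    obtain z where z: "C = cong_rel v \<pi> 1 `` {z}" "z \<in> valring v"
      using C(1) unfolding quot_def by (auto elim: quotientE)
    have "z \<in> C" using z equiv_class_self[OF eq1] by simp
    then have "t \<in> C" using C(2) by (metis someI)
    then have "t \<in> valring v" using in_quotient_imp_subset[OF eq1] C(1) unfolding quot_def by blast
    then show ?thesis by (simp add: valring_P)
  qed
  have rep: "\<exists>t\<in>T. P 1 (y - t)" if y: "P 0 y" for y
  proof -
    let ?C = "cong_rel v \<pi> 1 `` {y}"
    have C: "?C \<in> quot v \<pi> 1" unfolding quot_def using y by (auto simp: valring_P intro: quotientI)
    have "y \<in> ?C" using equiv_class_self[OF eq1] y by (simp add: valring_P)
    then have t0: "(SOME x. x \<in> ?C) \<in> ?C" by (metis someI)
    define t where "t = (SOME x. x \<in> ?C)"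
    have "(y, t) \<in> cong_rel v \<pi> 1" using t0 unfolding t_def by blast
    then have "P 1 (y - t)" unfolding cong_rel_P[OF pi] by simp
    moreover have "t \<in> T" using C unfolding T_def t_def by blast
    ultimately show ?thesis by blast
  qed
  have dlA: "P 0 (dlist \<pi> ts)" if "set ts \<subseteq> T" for ts
    using that
  proof (induction ts)
    case Nil then show ?case by simp
  next
    case (Cons t ts)
    have "P 0 \<pi>" using pi by (simp add: dvs_def)
    then show ?case using Cons TA by (auto intro!: P_add P_mult0)
  qed
  have digits: "\<exists>ts. set ts \<subseteq> T \<and> length ts = k \<and> P (int k) (y - dlist \<pi> ts)" if "P 0 y" for k y
    using that
  proof (induction k arbitrary: y)
    case 0 then show ?case by (intro exI[of _ "[]"]) simp
  next
    case (Suc k)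
    obtain t where t: "t \<in> T" "P 1 (y - t)" using rep[OF Suc.prems] by blast
    obtain y' where y': "P 0 y'" "y - t = \<pi> * y'"
      using P_div_pow[OF pi, of 1 0 "y - t"] t(2) by auto
    obtain ts where ts: "set ts \<subseteq> T" "length ts = k" "P (int k) (y' - dlist \<pi> ts)"
      using Suc.IH[OF y'(1)] by blast
    have "y - dlist \<pi> (t # ts) = \<pi> * (y' - dlist \<pi> ts)" using y'(2) by (simp add: algebra_simps)
    moreover have "P (1 + int k) (\<pi> * (y' - dlist \<pi> ts))"
      using P_mult[OF _ ts(3), of 1 \<pi>] pi by (simp add: dvs_def)
    ultimately show ?case using ts t by (intro exI[of _ "t # ts"]) auto
  qed
  define L where "L = {ts. set ts \<subseteq> T \<and> length ts = s}"
  have finL: "finite L" unfolding L_def using finite_lists_length_eq[OF finT] by simp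
  have cardL: "card L \<le> q ^ s" unfolding L_def card_lists_length_eq[OF finT]
    using cardT by (simp add: power_mono)
  define F where "F ts = cong_rel v \<pi> N `` {\<alpha> + \<pi> ^ (N - s) * dlist \<pi> ts}" for ts
  have sub: "{C \<in> quot v \<pi> N. \<exists>y\<in>C. P (int N - int s) (y - \<alpha>)} \<subseteq> F ` L"
  proof
    fix C assume "C \<in> {C \<in> quot v \<pi> N. \<exists>y\<in>C. P (int N - int s) (y - \<alpha>)}"
    then obtain y where C: "C \<in> quot v \<pi> N" "y \<in> C" "P (int N - int s) (y - \<alpha>)" by blast
    obtain z where z: "C = cong_rel v \<pi> N `` {z}" "z \<in> valring v"
      using C(1) unfolding quot_def by (auto elim: quotientE)
    have "(z, y) \<in> cong_rel v \<pi> N" using z C(2) by simp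
    then have Cy: "C = cong_rel v \<pi> N `` {y}" using equiv_class_eq[OF eqN] z by simp
    have y0: "P 0 y" using \<open>(z, y) \<in> cong_rel v \<pi> N\<close> unfolding cong_rel_P[OF pi] by simp
    have "P (int (N - s) + 0) (y - \<alpha>)" using C(3) sN by simp
    from P_div_pow[OF pi this] obtain z' where z': "P 0 z'" "y - \<alpha> = \<pi> ^ (N - s) * z'" by auto
    obtain ts where ts: "set ts \<subseteq> T" "length ts = s" "P (int s) (z' - dlist \<pi> ts)"
      using digits[OF z'(1)] by blast
    let ?w = "\<alpha> + \<pi> ^ (N - s) * dlist \<pi> ts"
    have p0: "P 0 \<pi>" using pi by (simp add: dvs_def)
    have w0: "P 0 ?w" using al dlA[OF ts(1)] P_pow[OF p0] by (auto intro!: P_add P_mult0)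
    have "y - ?w = \<pi> ^ (N - s) * (z' - dlist \<pi> ts)" using z'(2) by (simp add: algebra_simps)
    moreover have "P (int (N - s) + int s) (\<pi> ^ (N - s) * (z' - dlist \<pi> ts))"
      using P_mult[OF P_pi_pow[OF pi] ts(3)] .
    ultimately have "P (int N) (y - ?w)" using sN by simp
    then have "(y, ?w) \<in> cong_rel v \<pi> N" using y0 w0 unfolding cong_rel_P[OF pi] by simp
    then have "C = F ts" using Cy equiv_class_eq[OF eqN] unfolding F_def by simp
    then show "C \<in> F ` L" using ts unfolding L_def by blast
  qed
  have "finite (F ` L)" using finL by simp
  moreover have "card (F ` L) \<le> q ^ s" using card_image_le[OF finL, of F] cardL by linarith
  ultimately show ?thesis using sub by (meson card_mono finite_subset le_trans)
qed

end



theorem corollary3p11: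
  fixes v :: "'a::field \<Rightarrow> int" and \<pi> :: 'a and q :: nat and f :: "'a poly" and N :: nat
  assumes "discrete_valuation v"
    and "val_complete v"
    and "\<pi> \<noteq> 0" and "v \<pi> = 1"
    and "finite (quot v \<pi> 1)" and "card (quot v \<pi> 1) = q"
    and "\<forall>i. coeff f i \<in> valring v"
    and "monic f"
    and "resultant f (pderiv f) \<noteq> 0"
    and "r = v (resultant f (pderiv f))"
    and "int N > 2 * r"
  shows "card (roots_mod v \<pi> N f) \<le> q ^ nat r * card {x. poly f x = 0}"
proof -
  interpret dval v by unfold_locales (rule assms(1))
  note pi = assms(3,4)
  have fi: "intp f" using assms(7) unfolding intp_def valring_P by blast
  have gi: "intp (pderiv f)" using pderiv_intp[OF fi] .
  have eqN: "equiv (valring v) (cong_rel v \<pi> N)" using equiv_cong[OF pi] .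
  have rmA: "P 0 x \<and> P (int N) (poly f x)" if "C \<in> roots_mod v \<pi> N f" "x \<in> C"
    "poly f x \<in> (\<lambda>a. \<pi> ^ N * a) ` valring v" for C x
  proof -
    have "C \<in> quot v \<pi> N" using that(1) unfolding roots_mod_def by simp
    then have "x \<in> valring v" using in_quotient_imp_subset[OF eqN] that(2) unfolding quot_def by blast
    then show ?thesis using that(3) ideal_P[OF pi] valring_P by blast
  qed
  show ?thesis
  proof (cases "degree f = 0")
    case True
    then have f1: "f = 1" using assms(8) by (metis monic_degree_0)
    then have "r = 0" using assms(10) by (simp add: v1)
    then have "\<not> P (int N) 1" using assms(11) v1 by (simp add: dvs_def)
    then have "roots_mod v \<pi> N f = {}" using rmA f1 unfolding roots_mod_def by fastforce
    then show ?thesis by simp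
  next
    case False
    define \<Delta> where "\<Delta> = resultant f (pderiv f)"
    have d0: "degree f + degree (pderiv f) > 0" using False by simp
    have "P 0 \<Delta>" unfolding \<Delta>_def using res_P[OF fi gi P_1 order.refl poly_P0[OF fi P_1] poly_P0[OF gi P_1] d0] by simp
    then have r0: "r \<ge> 0" using assms(9,10) unfolding \<Delta>_def dvs_def by simp
    define s where "s = nat r"
    have sN: "s \<le> N" using r0 assms(11) unfolding s_def by simp
    have key: "\<exists>\<alpha>. P 0 \<alpha> \<and> poly f \<alpha> = 0 \<and> P (int N - int s) (x - \<alpha>)"
      if x: "P 0 x" and fx: "P (int N) (poly f x)" for x
    proof -
      have dx: "poly (pderiv f) x \<noteq> 0 \<and> v (poly (pderiv f) x) \<le> r"
      proof (rule ccontr)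
        assume "\<not> ?thesis"
        then have "P (r + 1) (poly (pderiv f) x)" unfolding dvs_def by auto
        moreover have "P (r + 1) (poly f x)" using P_mono[OF fx] assms(11) r0 by simp
        ultimately have "P (r + 1) \<Delta>" unfolding \<Delta>_def using res_P[OF fi gi x _ _ _ d0] r0 by simp
        then show False using assms(9,10) unfolding \<Delta>_def dvs_def by simp
      qed
      obtain \<alpha> where al: "P 0 \<alpha>" "poly f \<alpha> = 0" "P (int N - v (poly (pderiv f) x)) (\<alpha> - x)"
        using hensel[OF assms(2) fi x fx, of "v (poly (pderiv f) x)"] dx assms(11) by auto
      have "P (int N - int s) (\<alpha> - x)" using P_mono[OF al(3)] dx r0 unfolding s_def by simp
      then show ?thesis using al by (auto simp: P_diff_sym)
    qed
    define R where "R = {x. poly f x = 0}"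
    have f0: "f \<noteq> 0" using assms(8) by auto
    have finR: "finite R" unfolding R_def using poly_roots_finite[OF f0] .
    define B where "B \<alpha> = {C \<in> quot v \<pi> N. \<exists>y\<in>C. P (int N - int s) (y - \<alpha>)}" for \<alpha>
    define RA where "RA = {\<alpha> \<in> R. P 0 \<alpha>}"
    have finRA: "finite RA" using finR unfolding RA_def by simp
    have Bb: "finite (B \<alpha>) \<and> card (B \<alpha>) \<le> q ^ s" if "\<alpha> \<in> RA" for \<alpha>
      using count_ball[OF pi assms(5,6) _ sN] that unfolding B_def RA_def by blast
    have sub: "roots_mod v \<pi> N f \<subseteq> (\<Union>\<alpha>\<in>RA. B \<alpha>)"
    proof
      fix C assume C: "C \<in> roots_mod v \<pi> N f"
      then obtain x where x: "x \<in> C" "poly f x \<in> (\<lambda>a. \<pi> ^ N * a) ` valring v"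
        unfolding roots_mod_def by blast
      have "P 0 x \<and> P (int N) (poly f x)" using rmA[OF C x] .
      then obtain \<alpha> where "P 0 \<alpha>" "poly f \<alpha> = 0" "P (int N - int s) (x - \<alpha>)" using key by blast
      moreover have "C \<in> quot v \<pi> N" using C unfolding roots_mod_def by simp
      ultimately show "C \<in> (\<Union>\<alpha>\<in>RA. B \<alpha>)" using x unfolding B_def RA_def R_def by blast
    qed
    have "card (roots_mod v \<pi> N f) \<le> card (\<Union>\<alpha>\<in>RA. B \<alpha>)"
      using sub finRA Bb by (intro card_mono) auto
    also have "\<dots> \<le> (\<Sum>\<alpha>\<in>RA. card (B \<alpha>))" using card_UN_le[OF finRA] .
    also have "\<dots> \<le> (\<Sum>\<alpha>\<in>RA. q ^ s)" using Bb by (intro sum_mono) auto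
    also have "\<dots> = q ^ s * card RA" by simp
    also have "\<dots> \<le> q ^ s * card R" using finR unfolding RA_def by (intro mult_le_mono2 card_mono) auto
    finally show ?thesis unfolding s_def R_def .
  qed
qed


end
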